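(* For every $\varepsilon\in(0,3]$, the Truncated Harmonic rule $f^{TH}_\varepsilon$ has metric distortion at most $3+\varepsilon$, and its utilitarian distortion is $O(\sqrt m\,H_m/\varepsilon)$, i.e., there is an absolute constant $C$ such that for all $n,m$ and all $\varepsilon\in(0,3]$ its utilitarian distortion on instances with $m$ alternatives is at most $C\sqrt m\,H_m/\varepsilon$.
   Context: Setting: $n$ agents $\mathcal N$, $m$ alternatives $\mathcal A$; agent $i$ has a strict ranking, $r_i(Y)$ is the rank of $Y$ (1 = top), $X\succ_iY$ iff $r_i(X)<r_i(Y)$; $\mathrm{plu}(X,\vec\sigma)$ is the number of agents ranking $X$ first; $H_m=\sum_{k=1}^m1/k$. Metric framework: pseudometric $d$ on $\mathcal N\cup\mathcal A$, consistent with $\vec\sigma$ if $X\succ_iY\Rightarrow d(i,X)\le d(i,Y)$; $\mathrm{SC}(X,d)=\sum_id(i,X)$; metric distortion of a randomized rule $f$ is $\sup_{\vec\sigma}\sup_{d}\mathbb E_{X\sim f(\vec\sigma)}[\mathrm{SC}(X,d)]/\min_X\mathrm{SC}(X,d)$. Utilitarian framework: $u_i:\mathcal A\to\mathbb R_{\ge0}$, $\sum_Xu_i(X)=1$, consistent if $X\succ_iY\Rightarrow u_i(X)\ge u_i(Y)$; $\mathrm{SW}(X,\vec u)=\sum_iu_i(X)$; utilitarian distortion of $f$ is $\sup_{\vec\sigma}\sup_{\vec u}\max_X\mathrm{SW}(X,\vec u)/\mathbb E_{X\sim f(\vec\sigma)}[\mathrm{SW}(X,\vec u)]$. Plurality Veto: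 initialize $\mathrm{score}(X)=\mathrm{plu}(X,\vec\sigma)$; let $S$ be the alternatives with positive score; process agents in a fixed order, each decrementing the score of her lowest-ranked alternative in $S$, removing it from $S$ when its score hits $0$; output the last alternative removed. (It is known to have metric distortion $3$.) Truncated Harmonic rule $f^{TH}_\varepsilon$: let $\hat X$ be the output of Plurality Veto on $\vec\sigma$; pick an agent $i$ uniformly at random; output $Y$ with probability $p(i,Y)=\frac{\varepsilon}{6H_m r_i(Y)}$ if $Y\succ_i\hat X$, $p(i,\hat X)=1-\sum_{Y\succ_i\hat X}p(i,Y)$, and $p(i,Y)=0$ if $\hat X\succ_iY$. *)

theory Defs
  imports "HOL-Analysis.Harmonic_Numbers"
begin

(* Agents are 0..n-1, alternatives are 0..m-1.
   A profile is r :: nat => nat => nat, r i X = rank of X for agent i (1 = top). *)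

definition is_profile :: "nat \<Rightarrow> nat \<Rightarrow> (nat \<Rightarrow> nat \<Rightarrow> nat) \<Rightarrow> bool" where
  "is_profile n m r \<longleftrightarrow> (\<forall>i<n. bij_betw (r i) {..<m} {1..m})"

definition plu :: "(nat \<Rightarrow> nat \<Rightarrow> nat) \<Rightarrow> nat \<Rightarrow> nat \<Rightarrow> nat" where
  "plu r n X = card {i. i < n \<and> r i X = 1}"

definition lowest :: "(nat \<Rightarrow> nat \<Rightarrow> nat) \<Rightarrow> nat \<Rightarrow> nat set \<Rightarrow> nat" where
  "lowest r i S = (THE Y. Y \<in> S \<and> (\<forall>Z\<in>S. r i Z \<le> r i Y))"

(* state: (score, S, last alternative removed so far) *)
definition pv_step :: "(nat \<Rightarrow> nat \<Rightarrow> nat) \<Rightarrow> nat \<Rightarrow> (nat \<Rightarrow> nat) \<times> nat set \<times> nat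
                        \<Rightarrow> (nat \<Rightarrow> nat) \<times> nat set \<times> nat" where
  "pv_step r i st = (case st of (sc, S, lst) \<Rightarrow>
     (let Y = lowest r i S; sc' = sc(Y := sc Y - 1) in
       if sc' Y = 0 then (sc', S - {Y}, Y) else (sc', S, lst)))"

definition plurality_veto :: "(nat \<Rightarrow> nat \<Rightarrow> nat) \<Rightarrow> nat \<Rightarrow> nat \<Rightarrow> nat" where
  "plurality_veto r n m =
     snd (snd (fold (pv_step r) [0..<n] (plu r n, {X. X < m \<and> 0 < plu r n X}, undefined)))"

definition th_p :: "real \<Rightarrow> nat \<Rightarrow> (nat \<Rightarrow> nat \<Rightarrow> nat) \<Rightarrow> nat \<Rightarrow> nat \<Rightarrow> nat \<Rightarrow> real" where
  "th_p \<epsilon> m r Xh i Y =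
     (if r i Y < r i Xh then \<epsilon> / (6 * harm m * real (r i Y))
      else if Y = Xh then
        1 - (\<Sum>Z\<in>{Z. Z < m \<and> r i Z < r i Xh}. \<epsilon> / (6 * harm m * real (r i Z)))
      else 0)"

(* probability that f^TH_eps outputs Y (agent i chosen uniformly at random) *)
definition th_prob :: "real \<Rightarrow> nat \<Rightarrow> nat \<Rightarrow> (nat \<Rightarrow> nat \<Rightarrow> nat) \<Rightarrow> nat \<Rightarrow> real" where
  "th_prob \<epsilon> n m r Y = (\<Sum>i<n. th_p \<epsilon> m r (plurality_veto r n m) i Y) / real n"

(* points: Inl i = agent i, Inr X = alternative X *)
definition pseudometric_on :: "(nat + nat) set \<Rightarrow> ((nat + nat) \<Rightarrow> (nat + nat) \<Rightarrow> real) \<Rightarrow> bool" where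
  "pseudometric_on P d \<longleftrightarrow>
     (\<forall>x\<in>P. d x x = 0) \<and> (\<forall>x\<in>P. \<forall>y\<in>P. 0 \<le> d x y \<and> d x y = d y x) \<and>
     (\<forall>x\<in>P. \<forall>y\<in>P. \<forall>z\<in>P. d x z \<le> d x y + d y z)"

definition points :: "nat \<Rightarrow> nat \<Rightarrow> (nat + nat) set" where
  "points n m = Inl ` {..<n} \<union> Inr ` {..<m}"

definition metric_consistent :: "nat \<Rightarrow> nat \<Rightarrow> (nat \<Rightarrow> nat \<Rightarrow> nat) \<Rightarrow> ((nat + nat) \<Rightarrow> (nat + nat) \<Rightarrow> real) \<Rightarrow> bool" where
  "metric_consistent n m r d \<longleftrightarrow>
     (\<forall>i<n. \<forall>X<m. \<forall>Y<m. r i X < r i Y \<longrightarrow> d (Inl i) (Inr X) \<le> d (Inl i) (Inr Y))"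

definition SC :: "nat \<Rightarrow> ((nat + nat) \<Rightarrow> (nat + nat) \<Rightarrow> real) \<Rightarrow> nat \<Rightarrow> real" where
  "SC n d X = (\<Sum>i<n. d (Inl i) (Inr X))"

definition utilities_consistent :: "nat \<Rightarrow> nat \<Rightarrow> (nat \<Rightarrow> nat \<Rightarrow> nat) \<Rightarrow> (nat \<Rightarrow> nat \<Rightarrow> real) \<Rightarrow> bool" where
  "utilities_consistent n m r u \<longleftrightarrow>
     (\<forall>i<n. (\<forall>X<m. 0 \<le> u i X) \<and> (\<Sum>X<m. u i X) = 1 \<and>
            (\<forall>X<m. \<forall>Y<m. r i X < r i Y \<longrightarrow> u i X \<ge> u i Y))"

definition SW :: "nat \<Rightarrow> (nat \<Rightarrow> nat \<Rightarrow> real) \<Rightarrow> nat \<Rightarrow> real" where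
  "SW n u X = (\<Sum>i<n. u i X)"

end

theory Submission
  imports Defs
begin


definition pvst :: "(nat \<Rightarrow> nat \<Rightarrow> nat) \<Rightarrow> nat \<Rightarrow> nat \<Rightarrow> nat \<Rightarrow> (nat \<Rightarrow> nat) \<times> nat set \<times> nat" where
  "pvst r n m k = fold (pv_step r) [0..<k] (plu r n, {X. X < m \<and> 0 < plu r n X}, undefined)"

lemma pvst_0: "pvst r n m 0 = (plu r n, {X. X < m \<and> 0 < plu r n X}, undefined)"
  by (simp add: pvst_def)

lemma pvst_Suc: "pvst r n m (Suc k) = pv_step r k (pvst r n m k)"
  by (simp add: pvst_def)

lemma pv_is_pvst: "plurality_veto r n m = snd (snd (pvst r n m n))"
  by (simp add: pvst_def plurality_veto_def)

definition ptop :: "(nat \<Rightarrow> nat \<Rightarrow> nat) \<Rightarrow> nat \<Rightarrow> nat \<Rightarrow> nat" where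
  "ptop r m i = (SOME Y. Y < m \<and> r i Y = 1)"

lemma prof_inj: "is_profile n m r \<Longrightarrow> i < n \<Longrightarrow> inj_on (r i) {..<m}"
  unfolding is_profile_def bij_betw_def by blast

lemma prof_range: assumes "is_profile n m r" "i < n" "Y < m" shows "1 \<le> r i Y \<and> r i Y \<le> m"
proof -
  have "r i Y \<in> r i ` {..<m}" using assms(3) by auto
  then show ?thesis using assms unfolding is_profile_def bij_betw_def by auto
qed

lemma prof_surj: "is_profile n m r \<Longrightarrow> i < n \<Longrightarrow> 1 \<le> k \<Longrightarrow> k \<le> m \<Longrightarrow> \<exists>Y<m. r i Y = k"
  unfolding is_profile_def bij_betw_def
  by (metis (no_types, lifting) atLeastAtMost_iff imageE lessThan_iff)

lemma ptop:
  assumes "is_profile n m r" "i < n" "1 \<le> m"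
  shows "ptop r m i < m \<and> r i (ptop r m i) = 1 \<and> (\<forall>Y<m. r i Y = 1 \<longrightarrow> Y = ptop r m i)"
proof -
  have ex: "\<exists>Y. Y < m \<and> r i Y = 1" using prof_surj[OF assms(1,2), of 1] assms(3) by auto
  have a: "ptop r m i < m \<and> r i (ptop r m i) = 1"
    unfolding ptop_def using someI_ex[OF ex] .
  show ?thesis using a prof_inj[OF assms(1,2)] by (metis inj_onD lessThan_iff)
qed

lemma plu_top:
  assumes "is_profile n m r" "1 \<le> m" "Y < m"
  shows "plu r n Y = card {i\<in>{..<n}. ptop r m i = Y}"
proof -
  have "{i. i < n \<and> r i Y = 1} = {i\<in>{..<n}. ptop r m i = Y}"
    using ptop[OF assms(1) _ assms(2)] assms(3) by auto
  then show ?thesis by (simp add: plu_def)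
qed

lemma group_real:
  fixes g :: "'b \<Rightarrow> real"
  assumes "finite A" "finite B" "f ` A \<subseteq> B"
  shows "(\<Sum>x\<in>A. g (f x)) = (\<Sum>y\<in>B. real (card {x\<in>A. f x = y}) * g y)"
proof -
  have "(\<Sum>x\<in>A. g (f x)) = (\<Sum>y\<in>B. \<Sum>x\<in>{x\<in>A. f x = y}. g (f x))"
    using sum.group[OF assms, of "\<lambda>x. g (f x)"] by simp
  also have "\<dots> = (\<Sum>y\<in>B. real (card {x\<in>A. f x = y}) * g y)"
    by (intro sum.cong refl) simp
  finally show ?thesis .
qed

lemma group_nat:
  assumes "finite A" "finite B" "f ` A \<subseteq> B"
  shows "(\<Sum>y\<in>B. card {x\<in>A. f x = y}) = card A"
proof -
  have "(\<Sum>x\<in>A. (1::nat)) = (\<Sum>y\<in>B. \<Sum>x\<in>{x\<in>A. f x = y}. 1)"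
    using sum.group[OF assms, of "\<lambda>x. 1::nat"] by simp
  then show ?thesis by simp
qed

lemma sum_plu:
  assumes "is_profile n m r" "1 \<le> m"
  shows "(\<Sum>Y<m. plu r n Y) = n"
proof -
  have "(\<Sum>Y<m. plu r n Y) = (\<Sum>Y<m. card {i\<in>{..<n}. ptop r m i = Y})"
    using plu_top[OF assms] by simp
  also have "\<dots> = n"
    using group_nat[of "{..<n}" "{..<m}" "ptop r m"] ptop[OF assms(1) _ assms(2)] by auto
  finally show ?thesis .
qed

lemma lowest_prop:
  assumes "finite S" "S \<noteq> {}" "S \<subseteq> {..<m}" "inj_on (r i) {..<m}"
  shows "lowest r i S \<in> S \<and> (\<forall>Z\<in>S. r i Z \<le> r i (lowest r i S))"
proof -
  define M where "M = Max (r i ` S)"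
  have "M \<in> r i ` S" unfolding M_def using assms by simp
  then obtain Y where Y: "Y \<in> S" "r i Y = M" by auto
  have le: "\<forall>Z\<in>S. r i Z \<le> r i Y" using Y assms(1) unfolding M_def by simp
  have "\<exists>!Y. Y \<in> S \<and> (\<forall>Z\<in>S. r i Z \<le> r i Y)"
  proof (rule ex1I[of _ Y])
    show "Y \<in> S \<and> (\<forall>Z\<in>S. r i Z \<le> r i Y)" using Y le by blast
  next
    fix Y' assume "Y' \<in> S \<and> (\<forall>Z\<in>S. r i Z \<le> r i Y')"
    then have "r i Y' = r i Y" using Y le by (meson antisym)
    then show "Y' = Y" using assms(3,4) Y \<open>Y' \<in> S \<and> _\<close> by (meson inj_onD subsetD)
  qed
  then show ?thesis unfolding lowest_def by (rule theI')
qed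

lemma pv_step_sub: "fst (snd (pv_step r i st)) \<subseteq> fst (snd st)"
  by (cases st) (auto simp: pv_step_def Let_def)

lemma pvst_mono: "i \<le> j \<Longrightarrow> fst (snd (pvst r n m j)) \<subseteq> fst (snd (pvst r n m i))"
proof (induction j rule: dec_induct)
  case base then show ?case by simp
next
  case (step j) then show ?case using pv_step_sub[of r j "pvst r n m j"] by (simp add: pvst_Suc)
qed

definition "vv r n m i = lowest r i (fst (snd (pvst r n m i)))"

definition pvinv where
  "pvinv r n m k \<longleftrightarrow> (let sc = fst (pvst r n m k); S = fst (snd (pvst r n m k)) in
     S \<subseteq> {..<m} \<and> (\<forall>Y<m. Y \<in> S \<longleftrightarrow> 0 < sc Y) \<and> (\<Sum>Y<m. sc Y) + k = n \<and>
     (\<forall>Y<m. card {i. i < k \<and> vv r n m i = Y} + sc Y = plu r n Y))"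

lemma nonempty_of_sum:
  assumes "(\<Sum>Y<m. sc Y) + k = (n::nat)" "k < n" "\<forall>Y<m. Y \<in> S \<longleftrightarrow> 0 < sc Y"
  shows "S \<noteq> {}"
proof
  assume "S = {}"
  then have "\<forall>Y\<in>{..<m}. sc Y = 0" using assms(3) by auto
  then have "(\<Sum>Y<m. sc Y) = 0" by simp
  then show False using assms by simp
qed

lemma pvinv_0: assumes "is_profile n m r" "1 \<le> m" shows "pvinv r n m 0"
  using sum_plu[OF assms] by (auto simp: pvinv_def pvst_0 Let_def)

lemma pvinv_Suc:
  assumes prof: "is_profile n m r" and "1 \<le> m" and inv: "pvinv r n m k" and kn: "k < n"
  shows "pvinv r n m (Suc k)"
proof -
  obtain sc S lst where st: "pvst r n m k = (sc, S, lst)" by (cases "pvst r n m k") auto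
  have Ssub: "S \<subseteq> {..<m}" and Spos: "\<forall>Y<m. Y \<in> S \<longleftrightarrow> 0 < sc Y"
    and ssum: "(\<Sum>Y<m. sc Y) + k = n"
    and cnt: "\<forall>Y<m. card {i. i < k \<and> vv r n m i = Y} + sc Y = plu r n Y"
    using inv by (auto simp: pvinv_def st Let_def)
  have fin: "finite S" using Ssub finite_subset by blast
  have ne: "S \<noteq> {}" using nonempty_of_sum[OF ssum kn Spos] .
  define Y0 where "Y0 = lowest r k S"
  have Y0: "Y0 \<in> S" using lowest_prop[where r=r and i=k, OF fin ne Ssub prof_inj[OF prof kn]] Y0_def by blast
  have Y0m: "Y0 < m" using Y0 Ssub by auto
  have sc0: "0 < sc Y0" using Spos Y0 Y0m by blast
  have vk: "vv r n m k = Y0" by (simp add: vv_def st Y0_def)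
  define sc' where "sc' = sc(Y0 := sc Y0 - 1)"
  have nxt: "pvst r n m (Suc k) = (if sc' Y0 = 0 then (sc', S - {Y0}, Y0) else (sc', S, lst))"
    by (simp add: pvst_Suc st pv_step_def Let_def Y0_def sc'_def)
  define S' where "S' = (if sc' Y0 = 0 then S - {Y0} else S)"
  have nsc: "fst (pvst r n m (Suc k)) = sc'" and nS: "fst (snd (pvst r n m (Suc k))) = S'"
    using nxt by (auto simp: S'_def)
  have A: "S' \<subseteq> {..<m}" using Ssub by (auto simp: S'_def)
  have B: "\<forall>Y<m. Y \<in> S' \<longleftrightarrow> 0 < sc' Y"
    using Spos Y0 by (auto simp: S'_def sc'_def)
  have "(\<Sum>Y<m. sc Y) = sc Y0 + (\<Sum>Y\<in>{..<m}-{Y0}. sc Y)"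
    using Y0m by (simp add: sum.remove)
  moreover have "(\<Sum>Y<m. sc' Y) = sc' Y0 + (\<Sum>Y\<in>{..<m}-{Y0}. sc' Y)"
    using Y0m by (simp add: sum.remove)
  moreover have "(\<Sum>Y\<in>{..<m}-{Y0}. sc' Y) = (\<Sum>Y\<in>{..<m}-{Y0}. sc Y)"
    by (intro sum.cong) (auto simp: sc'_def)
  ultimately have C: "(\<Sum>Y<m. sc' Y) + Suc k = n" using ssum sc0 by (simp add: sc'_def)
  have D: "\<forall>Y<m. card {i. i < Suc k \<and> vv r n m i = Y} + sc' Y = plu r n Y"
  proof (intro allI impI)
    fix Y assume Ym: "Y < m"
    show "card {i. i < Suc k \<and> vv r n m i = Y} + sc' Y = plu r n Y"
    proof (cases "Y = Y0")
      case True
      have "{i. i < Suc k \<and> vv r n m i = Y} = insert k {i. i < k \<and> vv r n m i = Y}"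
        using vk True by auto
      then have "card {i. i < Suc k \<and> vv r n m i = Y} = Suc (card {i. i < k \<and> vv r n m i = Y})"
        by simp
      moreover have "card {i. i < k \<and> vv r n m i = Y0} + sc Y0 = plu r n Y0" using cnt Y0m by blast
      ultimately show ?thesis using True sc0 by (simp add: sc'_def)
    next
      case False
      have "{i. i < Suc k \<and> vv r n m i = Y} = {i. i < k \<and> vv r n m i = Y}"
        using vk False by (auto simp: less_Suc_eq)
      then show ?thesis using cnt Ym False by (simp add: sc'_def)
    qed
  qed
  show ?thesis using A B C D by (simp add: pvinv_def Let_def nsc nS)
qed

lemma pvinv_all: assumes "is_profile n m r" "1 \<le> m" shows "k \<le> n \<Longrightarrow> pvinv r n m k"
  by (induction k) (auto intro: pvinv_0[OF assms] pvinv_Suc[OF assms])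

lemma pv_final:
  assumes prof: "is_profile n m r" and m1: "1 \<le> m" and n1: "1 \<le> n"
  shows "plurality_veto r n m < m \<and>
         (\<forall>i<n. vv r n m i < m \<and> r i (plurality_veto r n m) \<le> r i (vv r n m i)) \<and>
         (\<forall>Y<m. card {i. i < n \<and> vv r n m i = Y} = plu r n Y)"
proof -
  define k where "k = n - 1"
  have kn: "k < n" and nk: "n = Suc k" using n1 by (auto simp: k_def)
  obtain sc S lst where st: "pvst r n m k = (sc, S, lst)" by (cases "pvst r n m k") auto
  have inv: "pvinv r n m k" using pvinv_all[OF prof m1] kn by simp
  have Ssub: "S \<subseteq> {..<m}" and Spos: "\<forall>Y<m. Y \<in> S \<longleftrightarrow> 0 < sc Y"
    and ssum: "(\<Sum>Y<m. sc Y) + k = n"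
    using inv by (auto simp: pvinv_def st Let_def)
  have fin: "finite S" using Ssub finite_subset by blast
  have ne: "S \<noteq> {}" using nonempty_of_sum[OF ssum kn Spos] .
  define Y0 where "Y0 = lowest r k S"
  have Y0: "Y0 \<in> S" using lowest_prop[where r=r and i=k, OF fin ne Ssub prof_inj[OF prof kn]] Y0_def by blast
  have Y0m: "Y0 < m" using Y0 Ssub by auto
  have sc0: "0 < sc Y0" using Spos Y0 Y0m by blast
  have "sc Y0 \<le> (\<Sum>Y<m. sc Y)" using Y0m by (intro member_le_sum) auto
  then have sc1: "sc Y0 = 1" using sc0 ssum nk by simp
  have e1: "plurality_veto r n m = snd (snd (pvst r n m (Suc k)))" using pv_is_pvst nk by metis
  have W: "plurality_veto r n m = Y0"
    unfolding e1 by (simp add: pvst_Suc st pv_step_def Let_def Y0_def[symmetric] sc1)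
  have P2: "\<forall>i<n. vv r n m i < m \<and> r i Y0 \<le> r i (vv r n m i)"
  proof (intro allI impI)
    fix i assume i: "i < n"
    have sub: "S \<subseteq> fst (snd (pvst r n m i))" using pvst_mono[of i k r n m] i nk st by simp
    have invi: "pvinv r n m i" using pvinv_all[OF prof m1] i by simp
    have Si: "fst (snd (pvst r n m i)) \<subseteq> {..<m}" using invi by (simp add: pvinv_def Let_def)
    have fi: "finite (fst (snd (pvst r n m i)))" using Si finite_subset by blast
    have "fst (snd (pvst r n m i)) \<noteq> {}" using sub ne by auto
    from lowest_prop[where r=r and i=i, OF fi this Si prof_inj[OF prof i]] sub Y0 Si
    show "vv r n m i < m \<and> r i Y0 \<le> r i (vv r n m i)" unfolding vv_def by auto
  qed
  have invn: "pvinv r n m n" using pvinv_all[OF prof m1] by simp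
  have P3: "\<forall>Y<m. card {i. i < n \<and> vv r n m i = Y} = plu r n Y"
  proof (intro allI impI)
    fix Y assume Ym: "Y < m"
    have s0: "(\<Sum>Y<m. fst (pvst r n m n) Y) = 0" using invn by (simp add: pvinv_def Let_def)
    then have "fst (pvst r n m n) Y = 0" using Ym by simp
    moreover have "card {i. i < n \<and> vv r n m i = Y} + fst (pvst r n m n) Y = plu r n Y"
      using invn Ym unfolding pvinv_def Let_def by blast
    ultimately show "card {i. i < n \<and> vv r n m i = Y} = plu r n Y" by simp
  qed
  show ?thesis using W Y0m P2 P3 by simp
qed

lemma pts: "i < n \<Longrightarrow> Inl i \<in> points n m" "X < m \<Longrightarrow> Inr X \<in> points n m"
  by (auto simp: points_def)

lemma cons_le:
  assumes prof: "is_profile n m r" and mc: "metric_consistent n m r d"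
    and i: "i < n" and X: "X < m" and Y: "Y < m" and le: "r i X \<le> r i Y"
  shows "d (Inl i) (Inr X) \<le> d (Inl i) (Inr Y)"
proof (cases "r i X = r i Y")
  case True
  then have "X = Y" using prof_inj[OF prof i] X Y by (auto dest: inj_onD)
  then show ?thesis by simp
next
  case False
  then show ?thesis using mc le i X Y unfolding metric_consistent_def by auto
qed

lemma pv_metric:
  assumes prof: "is_profile n m r" and m1: "1 \<le> m" and n1: "1 \<le> n"
    and pm: "pseudometric_on (points n m) d" and mc: "metric_consistent n m r d" and X: "X < m"
  shows "SC n d (plurality_veto r n m) \<le> 3 * SC n d X"
proof -
  define W where "W = plurality_veto r n m"
  define v where "v = vv r n m"
  define t where "t = ptop r m"
  note pf = pv_final[OF prof m1 n1, folded W_def v_def]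
  have tri: "\<And>x y z. x \<in> points n m \<Longrightarrow> y \<in> points n m \<Longrightarrow> z \<in> points n m \<Longrightarrow> d x z \<le> d x y + d y z"
    and sym: "\<And>x y. x \<in> points n m \<Longrightarrow> y \<in> points n m \<Longrightarrow> d x y = d y x"
    using pm unfolding pseudometric_on_def by blast+
  have vm: "\<And>i. i < n \<Longrightarrow> v i < m" using pf by blast
  have tm: "\<And>i. i < n \<Longrightarrow> t i < m \<and> r i (t i) = 1" using ptop[OF prof _ m1] t_def by blast
  have s1: "SC n d W \<le> (\<Sum>i<n. d (Inl i) (Inr X) + d (Inr X) (Inr (v i)))"
    unfolding SC_def
  proof (rule sum_mono)
    fix i assume "i \<in> {..<n}" then have i: "i < n" by simp
    have "d (Inl i) (Inr W) \<le> d (Inl i) (Inr (v i))"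
      using cons_le[OF prof mc i] pf i by blast
    also have "\<dots> \<le> d (Inl i) (Inr X) + d (Inr X) (Inr (v i))"
      using tri pts i X vm[OF i] by blast
    finally show "d (Inl i) (Inr W) \<le> d (Inl i) (Inr X) + d (Inr X) (Inr (v i))" .
  qed
  have "(\<Sum>i<n. d (Inr X) (Inr (v i))) = (\<Sum>Y<m. real (card {i\<in>{..<n}. v i = Y}) * d (Inr X) (Inr Y))"
    using group_real[of "{..<n}" "{..<m}" v "\<lambda>Y. d (Inr X) (Inr Y)"] vm by auto
  also have "\<dots> = (\<Sum>Y<m. real (card {i\<in>{..<n}. t i = Y}) * d (Inr X) (Inr Y))"
  proof (intro sum.cong refl)
    fix Y assume "Y \<in> {..<m}" then have Y: "Y < m" by simp
    have "card {i\<in>{..<n}. v i = Y} = card {i. i < n \<and> v i = Y}"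
      by (simp add: conj_commute)
    also have "\<dots> = plu r n Y" using pf Y by blast
    also have "\<dots> = card {i\<in>{..<n}. t i = Y}" using plu_top[OF prof m1 Y] t_def by simp
    finally show "real (card {i\<in>{..<n}. v i = Y}) * d (Inr X) (Inr Y) = real (card {i\<in>{..<n}. t i = Y}) * d (Inr X) (Inr Y)"
      by simp
  qed
  also have "\<dots> = (\<Sum>i<n. d (Inr X) (Inr (t i)))"
  proof -
    have img: "t ` {..<n} \<subseteq> {..<m}" using tm by auto
    show ?thesis using group_real[of "{..<n}" "{..<m}" t "\<lambda>Y. d (Inr X) (Inr Y)", OF _ _ img] by simp
  qed
  also have "\<dots> \<le> (\<Sum>i<n. 2 * d (Inl i) (Inr X))"
  proof (rule sum_mono)
    fix i assume "i \<in> {..<n}" then have i: "i < n" by simp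
    have "d (Inr X) (Inr (t i)) \<le> d (Inr X) (Inl i) + d (Inl i) (Inr (t i))"
      using tri pts i X tm[OF i] by blast
    also have "d (Inl i) (Inr (t i)) \<le> d (Inl i) (Inr X)"
      using cons_le[OF prof mc i] tm[OF i] X prof_range[OF prof i X] by simp
    also have "d (Inr X) (Inl i) = d (Inl i) (Inr X)" using sym pts i X by blast
    finally show "d (Inr X) (Inr (t i)) \<le> 2 * d (Inl i) (Inr X)" by simp
  qed
  finally have s2: "(\<Sum>i<n. d (Inr X) (Inr (v i))) \<le> 2 * SC n d X"
    by (simp add: SC_def sum_distrib_left)
  have "SC n d W \<le> SC n d X + (\<Sum>i<n. d (Inr X) (Inr (v i)))"
    using s1 by (simp add: sum.distrib SC_def)
  then show ?thesis using s2 W_def by simp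
qed



lemma E_swap:
  "(\<Sum>Y<m. th_prob \<epsilon> n m r Y * f Y) =
   (\<Sum>i<n. \<Sum>Y<m. th_p \<epsilon> m r (plurality_veto r n m) i Y * f Y) / real n"
  unfolding th_prob_def
  by (simp add: sum_divide_distrib sum_distrib_right sum.swap[of _ "{..<m}"])

definition "qq \<epsilon> m r W i Y = (if r i Y < r i W then \<epsilon> / (6 * harm m * real (r i Y)) else (0::real))"

lemma harm_sum_bound:
  assumes prof: "is_profile n m r" and i: "i < n"
  shows "(\<Sum>Z\<in>{Z. Z < m \<and> r i Z < r i W}. 1 / real (r i Z)) \<le> harm m"
proof -
  define B where "B = {Z. Z < m \<and> r i Z < r i W}"
  have injB: "inj_on (r i) B" using prof_inj[OF prof i] by (rule inj_on_subset) (auto simp: B_def)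
  have "(\<Sum>Z\<in>B. 1 / real (r i Z)) = (\<Sum>k\<in>r i ` B. 1 / real k)"
    using sum.reindex[OF injB, of "\<lambda>k. 1 / real k"] by simp
  also have "\<dots> \<le> (\<Sum>k\<in>{1..m}. 1 / real k)"
    by (rule sum_mono2) (use prof_range[OF prof i] in \<open>auto simp: B_def\<close>)
  also have "\<dots> = harm m" by (simp add: harm_def divide_inverse)
  finally show ?thesis by (simp add: B_def)
qed

lemma better_sum_bound:
  assumes prof: "is_profile n m r" and i: "i < n" and m1: "1 \<le> m" and e: "0 < \<epsilon>"
  shows "(\<Sum>Z\<in>{Z. Z < m \<and> r i Z < r i W}. \<epsilon> / (6 * harm m * real (r i Z))) \<le> \<epsilon> / 6"
proof -
  have h: "harm m > (0::real)" using m1 by simp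
  have "(\<Sum>Z\<in>{Z. Z < m \<and> r i Z < r i W}. \<epsilon> / (6 * harm m * real (r i Z)))
      = \<epsilon> / (6 * harm m) * (\<Sum>Z\<in>{Z. Z < m \<and> r i Z < r i W}. 1 / real (r i Z))"
    by (simp add: sum_distrib_left)
  also have "\<dots> \<le> \<epsilon> / (6 * harm m) * harm m"
    by (rule mult_left_mono[OF harm_sum_bound[OF prof i]]) (use e h in \<open>simp add: harm_nonneg\<close>)
  also have "\<dots> = \<epsilon> / 6" using h by (simp add: field_simps del: harm_pos_iff)
  finally show ?thesis .
qed

lemma qq_sum:
  "(\<Sum>Y<m. qq \<epsilon> m r W i Y) = (\<Sum>Z\<in>{Z. Z < m \<and> r i Z < r i W}. \<epsilon> / (6 * harm m * real (r i Z)))"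
proof -
  have e: "{Z. Z < m \<and> r i Z < r i W} = {Z\<in>{..<m}. r i Z < r i W}" by auto
  have "(\<Sum>Z\<in>{Z\<in>{..<m}. r i Z < r i W}. \<epsilon> / (6 * harm m * real (r i Z))) = (\<Sum>Z<m. if r i Z < r i W then \<epsilon> / (6 * harm m * real (r i Z)) else 0)"
    by (rule sum.inter_filter) simp
  then show ?thesis unfolding e qq_def by simp
qed

lemma qq_nonneg: "0 < \<epsilon> \<Longrightarrow> 0 \<le> qq \<epsilon> m r W i Y"
  by (simp add: qq_def harm_nonneg)

lemma thp_eq:
  "th_p \<epsilon> m r W i Y = qq \<epsilon> m r W i Y +
     (if Y = W then 1 - (\<Sum>Z\<in>{Z. Z < m \<and> r i Z < r i W}. \<epsilon> / (6 * harm m * real (r i Z))) else 0)"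
  by (simp add: th_p_def qq_def)

lemma thp_sum:
  assumes "W < m"
  shows "(\<Sum>Y<m. th_p \<epsilon> m r W i Y) = 1"
  using assms by (simp add: thp_eq sum.distrib qq_sum)

lemma thp_W:
  assumes prof: "is_profile n m r" and i: "i < n" and m1: "1 \<le> m" and e: "0 < \<epsilon>" "\<epsilon> \<le> 3"
  shows "th_p \<epsilon> m r W i W \<ge> 1/2"
  using better_sum_bound[OF prof i m1 e(1), of W] e by (simp add: thp_eq qq_def)

lemma thp_ge_qq:
  assumes prof: "is_profile n m r" and i: "i < n" and m1: "1 \<le> m" and e: "0 < \<epsilon>" "\<epsilon> \<le> 3"
  shows "th_p \<epsilon> m r W i Y \<ge> qq \<epsilon> m r W i Y"
  using better_sum_bound[OF prof i m1 e(1), of W] e by (simp add: thp_eq)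

lemma thp_nonneg:
  assumes prof: "is_profile n m r" and i: "i < n" and m1: "1 \<le> m" and e: "0 < \<epsilon>" "\<epsilon> \<le> 3"
  shows "th_p \<epsilon> m r W i Y \<ge> 0"
  using thp_ge_qq[OF assms] qq_nonneg[OF e(1)] by (rule order_trans[rotated])

lemma thp_zero: "\<not> r i Y < r i W \<Longrightarrow> Y \<noteq> W \<Longrightarrow> th_p \<epsilon> m r W i Y = 0"
  by (simp add: th_p_def)

lemma SC_nonneg: "pseudometric_on (points n m) d \<Longrightarrow> X < m \<Longrightarrow> 0 \<le> SC n d X"
  unfolding SC_def pseudometric_on_def by (intro sum_nonneg) (auto simp: points_def)

lemma th_metric:
  assumes e: "0 < \<epsilon>" "\<epsilon> \<le> 3" and n1: "1 \<le> n" and m1: "1 \<le> m" and prof: "is_profile n m r"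
    and pm: "pseudometric_on (points n m) d" and mc: "metric_consistent n m r d" and X: "X < m"
  shows "(\<Sum>Y<m. th_prob \<epsilon> n m r Y * SC n d Y) \<le> (3 + \<epsilon>) * SC n d X"
proof -
  define W where "W = plurality_veto r n m"
  have Wm: "W < m" using pv_final[OF prof m1 n1] W_def by simp
  have tri: "\<And>x y z. x \<in> points n m \<Longrightarrow> y \<in> points n m \<Longrightarrow> z \<in> points n m \<Longrightarrow> d x z \<le> d x y + d y z"
    and sym: "\<And>x y. x \<in> points n m \<Longrightarrow> y \<in> points n m \<Longrightarrow> d x y = d y x"
    and nn: "\<And>x y. x \<in> points n m \<Longrightarrow> y \<in> points n m \<Longrightarrow> 0 \<le> d x y"
    using pm unfolding pseudometric_on_def by blast+
  have SCb: "SC n d Y \<le> SC n d W + 2 * real n * d (Inl i) (Inr W)"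
    if i: "i < n" and Y: "Y < m" and lt: "r i Y < r i W" for i Y
  proof -
    have dWY: "d (Inr W) (Inr Y) \<le> 2 * d (Inl i) (Inr W)"
    proof -
      have "d (Inr W) (Inr Y) \<le> d (Inr W) (Inl i) + d (Inl i) (Inr Y)"
        using tri pts i Y Wm by blast
      also have "d (Inl i) (Inr Y) \<le> d (Inl i) (Inr W)"
        using cons_le[OF prof mc i Y Wm] lt by simp
      also have "d (Inr W) (Inl i) = d (Inl i) (Inr W)" using sym pts i Wm by blast
      finally show ?thesis by simp
    qed
    have "SC n d Y \<le> (\<Sum>j<n. d (Inl j) (Inr W) + d (Inr W) (Inr Y))"
      unfolding SC_def by (rule sum_mono) (use tri pts Y Wm in blast)
    also have "\<dots> = SC n d W + real n * d (Inr W) (Inr Y)" by (simp add: SC_def sum.distrib)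
    also have "\<dots> \<le> SC n d W + real n * (2 * d (Inl i) (Inr W))"
      using dWY by (intro add_left_mono mult_left_mono) auto
    finally show ?thesis by simp
  qed
  have per: "(\<Sum>Y<m. th_p \<epsilon> m r W i Y * SC n d Y) \<le> SC n d W + \<epsilon> / 3 * real n * d (Inl i) (Inr W)"
    if i: "i < n" for i
  proof -
    define c where "c = 2 * real n * d (Inl i) (Inr W)"
    have c0: "0 \<le> c" using nn pts i Wm by (simp add: c_def)
    have "(\<Sum>Y<m. th_p \<epsilon> m r W i Y * SC n d Y) \<le> (\<Sum>Y<m. th_p \<epsilon> m r W i Y * SC n d W + qq \<epsilon> m r W i Y * c)"
    proof (rule sum_mono)
      fix Y assume "Y \<in> {..<m}" then have Y: "Y < m" by simp
      show "th_p \<epsilon> m r W i Y * SC n d Y \<le> th_p \<epsilon> m r W i Y * SC n d W + qq \<epsilon> m r W i Y * c"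
      proof (cases "r i Y < r i W")
        case True
        have p: "th_p \<epsilon> m r W i Y = qq \<epsilon> m r W i Y" using True by (simp add: th_p_def qq_def)
        have "qq \<epsilon> m r W i Y * SC n d Y \<le> qq \<epsilon> m r W i Y * (SC n d W + c)"
          using SCb[OF i Y True] qq_nonneg[OF e(1)] c_def by (intro mult_left_mono) auto
        then show ?thesis using p by (simp add: algebra_simps)
      next
        case False
        then have q: "qq \<epsilon> m r W i Y = 0" by (simp add: qq_def)
        show ?thesis
        proof (cases "Y = W")
          case True then show ?thesis using q by simp
        next
          case False then show ?thesis using q thp_zero[where r=r and i=i and Y=Y and W=W, OF \<open>\<not> r i Y < r i W\<close>] by simp
        qed
      qed
    qed
    also have "\<dots> = SC n d W + c * (\<Sum>Y<m. qq \<epsilon> m r W i Y)"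
      by (simp add: sum.distrib sum_distrib_left[symmetric] sum_distrib_right[symmetric] thp_sum[OF Wm])
    also have "\<dots> \<le> SC n d W + c * (\<epsilon> / 6)"
      using better_sum_bound[OF prof i m1 e(1), of W] c0 by (intro add_left_mono mult_left_mono) (auto simp: qq_sum)
    also have "\<dots> = SC n d W + \<epsilon> / 3 * real n * d (Inl i) (Inr W)" by (simp add: c_def)
    finally show ?thesis .
  qed
  have "(\<Sum>Y<m. th_prob \<epsilon> n m r Y * SC n d Y) = (\<Sum>i<n. \<Sum>Y<m. th_p \<epsilon> m r W i Y * SC n d Y) / real n"
    using E_swap W_def by simp
  also have "\<dots> \<le> (\<Sum>i<n. SC n d W + \<epsilon> / 3 * real n * d (Inl i) (Inr W)) / real n"
    by (intro divide_right_mono sum_mono per) auto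
  also have "\<dots> = SC n d W + \<epsilon> / 3 * SC n d W"
  proof -
    have "(\<Sum>i<n. SC n d W + \<epsilon> / 3 * real n * d (Inl i) (Inr W)) = real n * (SC n d W + \<epsilon> / 3 * SC n d W)"
      by (simp add: sum.distrib SC_def sum_distrib_left algebra_simps)
    then show ?thesis using n1 by simp
  qed
  also have "\<dots> = (1 + \<epsilon> / 3) * SC n d W" by (simp add: algebra_simps)
  also have "\<dots> \<le> (1 + \<epsilon> / 3) * (3 * SC n d X)"
    using pv_metric[OF prof m1 n1 pm mc X] e W_def by (intro mult_left_mono) auto
  also have "\<dots> = (3 + \<epsilon>) * SC n d X" by (simp add: algebra_simps)
  finally show ?thesis .
qed



lemma aL1:
  fixes w E mm nn h eps :: real
  assumes "nn \<le> 2 * mm * w" "w \<le> 2 * E" "1 \<le> mm" "1 \<le> h" "0 \<le> E" "0 < eps" "eps \<le> 3" "0 \<le> nn"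
  shows "eps * nn \<le> 24 * h * mm * E"
proof -
  have "2 * mm * w \<le> 2 * mm * (2 * E)" using assms by (intro mult_left_mono) auto
  then have "nn \<le> 4 * mm * E" using assms(1) by linarith
  moreover have "4 * mm * E \<le> 4 * h * mm * E" using assms by (intro mult_right_mono) auto
  moreover have "eps * nn \<le> 6 * nn" using assms by (intro mult_right_mono) auto
  moreover have "0 \<le> mm * E" using assms by simp
  ultimately show ?thesis by linarith
qed

lemma aL2:
  fixes w E mm nn h eps T :: real
  assumes "\<not> nn \<le> 2 * mm * w" "1 \<le> mm" "1 \<le> h" "0 \<le> E" "0 < eps" "0 \<le> nn"
    "eps * (T ^ 2 / mm) \<le> E * nn * (6 * h)" "nn - mm * w \<le> T"
  shows "eps * nn \<le> 24 * h * mm * E"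
proof -
  have T2: "nn / 2 \<le> T" using assms(1,8) by linarith
  have "(nn / 2) ^ 2 \<le> T ^ 2" using T2 assms by (intro power_mono) auto
  then have "(nn / 2) ^ 2 / mm \<le> T ^ 2 / mm" using assms by (intro divide_right_mono) auto
  then have "eps * ((nn/2)^2 / mm) \<le> eps * (T ^ 2 / mm)"
    using assms by (intro mult_left_mono) auto
  with assms(7) have a: "eps * ((nn/2)^2 / mm) \<le> E * nn * (6 * h)" by linarith
  have mm0: "mm \<noteq> 0" using assms by simp
  have e1: "eps * ((nn/2)^2 / mm) * (4 * mm) = nn * (eps * nn)"
    using mm0 by (simp add: power2_eq_square)
  have e2: "E * nn * (6 * h) * (4 * mm) = nn * (24 * h * mm * E)" by (simp add: algebra_simps)
  have le: "eps * ((nn/2)^2 / mm) * (4 * mm) \<le> E * nn * (6 * h) * (4 * mm)"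
    using a assms by (intro mult_right_mono) auto
  have k: "nn * (eps * nn) \<le> nn * (24 * h * mm * E)" using e1 e2 le by linarith
  show ?thesis
  proof (cases "nn = 0")
    case True then show ?thesis using assms by simp
  next
    case False then have "0 < nn" using assms by simp
    then show ?thesis using k by simp
  qed
qed

lemma aK:
  fixes mm h eps :: real
  assumes "1 \<le> mm" "1 \<le> h" "0 < eps" "eps \<le> 3"
  shows "1/3 \<le> sqrt mm * h / eps"
proof -
  have "1 \<le> sqrt mm" using assms by simp
  then have "1 \<le> sqrt mm * h" using assms by (metis mult_mono' mult.right_neutral order_trans zero_le_one)
  then have "eps / 3 \<le> sqrt mm * h" using assms by simp
  then show ?thesis using assms by (simp add: pos_le_divide_eq mult.commute)
qed

lemma aC2:
  fixes s t E mm nn h eps :: real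
  assumes "\<not> t \<le> s / 2" "1 \<le> mm" "1 \<le> h" "0 \<le> E" "0 < eps" "0 \<le> s"
    "eps * s * t \<le> E * nn * (6 * h)" "eps * nn \<le> 24 * h * mm * E"
  shows "s \<le> 20 * sqrt mm * h / eps * E"
proof -
  have a1: "eps * s * (s / 2) \<le> eps * s * t" using assms by (intro mult_left_mono) auto
  have a2: "eps * s * (s / 2) = (eps * (s * s)) / 2" by simp
  have a3: "E * nn * (6 * h) = (12 * h * nn * E) / 2" by simp
  have "eps * (s * s) \<le> 12 * h * nn * E" using a1 a2 a3 assms(7) by linarith
  then have "eps * (eps * (s * s)) \<le> eps * (12 * h * nn * E)" using assms by (intro mult_left_mono) auto
  also have "\<dots> = 12 * h * E * (eps * nn)" by (simp add: algebra_simps)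
  also have "\<dots> \<le> 12 * h * E * (24 * h * mm * E)" using assms by (intro mult_left_mono) auto
  finally have f1: "eps * (eps * (s * s)) \<le> 12 * h * E * (24 * h * mm * E)" .
  have sq: "sqrt mm * sqrt mm = mm" using assms by simp
  have f3: "(eps * s) * (eps * s) = eps * (eps * (s * s))" by (simp add: algebra_simps)
  have f4: "(20 * h * sqrt mm * E) * (20 * h * sqrt mm * E) = 400 * h * h * (sqrt mm * sqrt mm) * E * E"
    by (simp add: algebra_simps)
  have f5: "12 * h * E * (24 * h * mm * E) = 288 * h * h * mm * E * E" by (simp add: algebra_simps)
  have f6: "0 \<le> h * h * mm * E * E" using assms by simp
  have "(eps * s) * (eps * s) \<le> (20 * h * sqrt mm * E) * (20 * h * sqrt mm * E)"
    unfolding f3 f4 sq using f1 f5 f6 by linarith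
  then have "(eps * s)^2 \<le> (20 * h * sqrt mm * E)^2" by (simp add: power2_eq_square)
  moreover have nn0: "0 \<le> 20 * h * sqrt mm * E" using assms by simp
  ultimately have r: "eps * s \<le> 20 * h * sqrt mm * E"
    by (rule power2_le_imp_le)
  have "20 * sqrt mm * h / eps * E = (20 * h * sqrt mm * E) / eps" by simp
  then show ?thesis using r assms(5) by (simp add: pos_le_divide_eq mult_ac)
qed

lemma u_le_inv:
  assumes prof: "is_profile n m r" and uc: "utilities_consistent n m r u" and i: "i < n" and Y: "Y < m"
  shows "u i Y \<le> 1 / real (r i Y)"
proof -
  define L where "L = {Z\<in>{..<m}. r i Z \<le> r i Y}"
  have inj: "inj_on (r i) L" using prof_inj[OF prof i] by (rule inj_on_subset) (auto simp: L_def)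
  have img: "r i ` L = {1..r i Y}"
  proof
    show "r i ` L \<subseteq> {1..r i Y}" using prof_range[OF prof i] by (auto simp: L_def)
    show "{1..r i Y} \<subseteq> r i ` L"
    proof
      fix k assume k: "k \<in> {1..r i Y}"
      then obtain Z where "Z < m" "r i Z = k" using prof_surj[OF prof i, of k] prof_range[OF prof i Y] by auto
      then show "k \<in> r i ` L" using k by (auto simp: L_def)
    qed
  qed
  have cardL: "card L = r i Y" using card_image[OF inj] img by simp
  have ui: "\<forall>X<m. 0 \<le> u i X" "(\<Sum>X<m. u i X) = 1" "\<forall>X<m. \<forall>Y<m. r i X < r i Y \<longrightarrow> u i X \<ge> u i Y"
    using uc i unfolding utilities_consistent_def by blast+
  have "real (card L) * u i Y = (\<Sum>Z\<in>L. u i Y)" by simp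
  also have "\<dots> \<le> (\<Sum>Z\<in>L. u i Z)"
  proof (rule sum_mono)
    fix Z assume Z: "Z \<in> L"
    show "u i Y \<le> u i Z"
    proof (cases "r i Z = r i Y")
      case True then have "Z = Y" using prof_inj[OF prof i] Z Y by (auto simp: L_def dest: inj_onD)
      then show ?thesis by simp
    next
      case False then show ?thesis using ui(3) Z Y by (auto simp: L_def)
    qed
  qed
  also have "\<dots> \<le> (\<Sum>Z<m. u i Z)" by (rule sum_mono2) (use ui(1) in \<open>auto simp: L_def\<close>)
  also have "\<dots> = 1" using ui(2) .
  finally have "real (r i Y) * u i Y \<le> 1" using cardL by simp
  moreover have "1 \<le> r i Y" using prof_range[OF prof i Y] by simp
  ultimately show ?thesis by (simp add: field_simps)
qed

lemma harm_ge1: "1 \<le> m \<Longrightarrow> (1::real) \<le> harm m"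
  using harm_mono[of 1 m] by (simp add: harm_def)


lemma th_util_arith:
  fixes s t w E eps h mm nn T :: real
  assumes e: "0 < eps" "eps \<le> 3" and h: "1 \<le> h" and mm: "1 \<le> mm" and nn: "0 \<le> nn"
    and s0: "0 \<le> s" and E0: "0 \<le> E"
    and A1: "w \<le> 2 * E"
    and A2: "eps * s * t \<le> E * nn * (6 * h)"
    and A3: "eps * (T ^ 2 / mm) \<le> E * nn * (6 * h)"
    and A4: "nn - mm * w \<le> T"
    and A5: "s \<le> t + w"
  shows "s \<le> 20 * sqrt mm * h / eps * E"
proof -
  have L: "eps * nn \<le> 24 * h * mm * E"
  proof (cases "nn \<le> 2 * mm * w")
    case True then show ?thesis using aL1[of nn mm w E h eps] assms by blast
  next
    case False then show ?thesis using aL2[of nn mm w h E eps T] assms by blast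
  qed
  show ?thesis
  proof (cases "t \<le> s / 2")
    case True
    then have "s \<le> 4 * E" using A5 A1 by linarith
    also have "\<dots> \<le> 20 * (sqrt mm * h / eps) * E"
    proof -
      have "1/3 \<le> sqrt mm * h / eps" using aK[of mm h eps] assms by blast
      then have "4 \<le> 20 * (sqrt mm * h / eps)" by linarith
      then show ?thesis using E0 by (intro mult_right_mono) auto
    qed
    finally show ?thesis by simp
  next
    case False then show ?thesis using aC2[of t s mm h E eps nn] assms L by blast
  qed
qed

lemma th_util:
  assumes e: "0 < \<epsilon>" "\<epsilon> \<le> 3" and n1: "1 \<le> n" and m1: "1 \<le> m" and prof: "is_profile n m r"
    and uc: "utilities_consistent n m r u" and X: "X < m"
  shows "SW n u X \<le> 20 * sqrt (real m) * harm m / \<epsilon> * (\<Sum>Y<m. th_prob \<epsilon> n m r Y * SW n u Y)"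
proof -
  define W where "W = plurality_veto r n m"
  have Wm: "W < m" using pv_final[OF prof m1 n1] W_def by simp
  define E where "E = (\<Sum>Y<m. th_prob \<epsilon> n m r Y * SW n u Y)"
  define h :: real where "h = harm m"
  have h1: "1 \<le> h" using harm_ge1[OF m1] h_def by simp
  define p where "p = th_p \<epsilon> m r W"
  define q where "q = qq \<epsilon> m r W"
  have ui: "\<And>i. i < n \<Longrightarrow> (\<forall>X<m. 0 \<le> u i X) \<and> (\<Sum>X<m. u i X) = 1 \<and> (\<forall>X<m. \<forall>Y<m. r i X < r i Y \<longrightarrow> u i X \<ge> u i Y)"
    using uc unfolding utilities_consistent_def by blast
  have SWnn: "\<And>Y. Y < m \<Longrightarrow> 0 \<le> SW n u Y" unfolding SW_def using ui by (intro sum_nonneg) auto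
  define SWT where "SWT Y = (\<Sum>i<n. if r i Y < r i W then u i Y else 0)" for Y
  have SWTnn: "\<And>Y. Y < m \<Longrightarrow> 0 \<le> SWT Y" unfolding SWT_def using ui by (intro sum_nonneg) auto
  have SWTle: "\<And>Y. Y < m \<Longrightarrow> SWT Y \<le> SW n u Y" unfolding SWT_def SW_def using ui by (intro sum_mono) auto
  have pnn: "\<And>i Y. i < n \<Longrightarrow> 0 \<le> p i Y" unfolding p_def using thp_nonneg[OF prof _ m1 e] by blast
  define D where "D = (\<Sum>i<n. \<Sum>Y<m. p i Y * SW n u Y)"
  have ED: "E * real n = D" unfolding E_def D_def p_def W_def using E_swap n1 by simp
  have E0: "0 \<le> E"
  proof -
    have "0 \<le> D" unfolding D_def using pnn SWnn by (intro sum_nonneg mult_nonneg_nonneg) auto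
    moreover have "E = D / real n" using ED n1 by (simp add: field_simps)
    ultimately show ?thesis by simp
  qed
  have A1: "SW n u W \<le> 2 * E"
  proof -
    have "real n * (SW n u W / 2) \<le> D" unfolding D_def
    proof -
      have "(\<Sum>i<n. SW n u W / 2) \<le> (\<Sum>i<n. \<Sum>Y<m. p i Y * SW n u Y)"
      proof (rule sum_mono)
        fix i assume "i \<in> {..<n}" then have i: "i < n" by simp
        have "1/2 * SW n u W \<le> p i W * SW n u W"
          using thp_W[OF prof i m1 e, of W] SWnn[OF Wm] p_def by (intro mult_right_mono) auto
        then have "SW n u W / 2 \<le> p i W * SW n u W" by simp
        also have "\<dots> \<le> (\<Sum>Y<m. p i Y * SW n u Y)"
          using Wm pnn[OF i] SWnn by (intro member_le_sum[where f="\<lambda>Y. p i Y * SW n u Y"]) auto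
        finally show "SW n u W / 2 \<le> (\<Sum>Y<m. p i Y * SW n u Y)" .
      qed
      then show "real n * (SW n u W / 2) \<le> (\<Sum>i<n. \<Sum>Y<m. p i Y * SW n u Y)" by simp
    qed
    then have "real n * (SW n u W / 2) \<le> real n * E" using ED by (simp add: mult.commute)
    then show ?thesis using n1 by simp
  qed
  define G where "G = (\<Sum>Y<m. SW n u Y * SWT Y)"
  have B: "\<epsilon> * G \<le> 6 * h * D"
  proof -
    have qge: "\<epsilon> / (6 * h) * (if r i Y < r i W then u i Y else 0) \<le> q i Y" if i: "i < n" and Y: "Y < m" for i Y
    proof (cases "r i Y < r i W")
      case True
      have "u i Y \<le> 1 / real (r i Y)" using u_le_inv[OF prof uc i Y] .
      then have "\<epsilon> / (6 * h) * u i Y \<le> \<epsilon> / (6 * h) * (1 / real (r i Y))"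
        using e h1 by (intro mult_left_mono) auto
      then show ?thesis using True by (simp add: q_def qq_def h_def)
    next
      case False then show ?thesis by (simp add: q_def qq_def)
    qed
    have "\<epsilon> / (6 * h) * G = (\<Sum>Y<m. SW n u Y * (\<Sum>i<n. \<epsilon> / (6 * h) * (if r i Y < r i W then u i Y else 0)))"
      unfolding G_def SWT_def by (simp add: sum_distrib_left mult_ac)
    also have "\<dots> \<le> (\<Sum>Y<m. SW n u Y * (\<Sum>i<n. q i Y))"
      using qge SWnn by (intro sum_mono mult_left_mono) auto
    also have "\<dots> = (\<Sum>i<n. \<Sum>Y<m. q i Y * SW n u Y)"
      by (simp add: sum_distrib_left sum.swap[of _ "{..<n}"] mult_ac)
    also have "\<dots> \<le> D"
      unfolding D_def using thp_ge_qq[OF prof _ m1 e] SWnn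
      by (intro sum_mono mult_right_mono) (auto simp: p_def q_def)
    finally have "\<epsilon> / (6 * h) * G \<le> D" .
    then show ?thesis using h1 by (simp add: field_simps)
  qed
  have Gnn: "\<And>Y. Y < m \<Longrightarrow> 0 \<le> SW n u Y * SWT Y" using SWnn SWTnn by simp
  have GX: "SW n u X * SWT X \<le> G"
    unfolding G_def using X Gnn by (intro member_le_sum[where f="\<lambda>Y. SW n u Y * SWT Y"]) auto
  define T where "T = (\<Sum>Y<m. SWT Y)"
  have GT: "T ^ 2 / real m \<le> G"
  proof -
    have "T ^ 2 \<le> (\<Sum>Y<m. (SWT Y)^2) * real m"
      using sum_squared_le_sum_of_squares[of SWT "{..<m}"] T_def by simp
    moreover have "(\<Sum>Y<m. (SWT Y)^2) \<le> G"
      unfolding G_def power2_eq_square using SWTle SWTnn by (intro sum_mono mult_right_mono) auto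
    ultimately have "T ^ 2 \<le> G * real m" using m1 by (meson mult_right_mono of_nat_0_le_iff order_trans)
    then show ?thesis using m1 by (simp add: pos_divide_le_eq)
  qed
  have A4: "real n - real m * SW n u W \<le> T"
  proof -
    have per: "1 - real m * u i W \<le> (\<Sum>Y<m. if r i Y < r i W then u i Y else 0)" if i: "i < n" for i
    proof -
      have "(\<Sum>Y<m. if r i Y < r i W then 0 else u i Y) \<le> (\<Sum>Y<m. u i W)"
      proof (rule sum_mono)
        fix Y assume "Y \<in> {..<m}" then have Y: "Y < m" by simp
        show "(if r i Y < r i W then 0 else u i Y) \<le> u i W"
        proof (cases "r i Y < r i W")
          case True then show ?thesis using ui[OF i] Wm by auto
        next
          case False
          show ?thesis
          proof (cases "Y = W")
            case True then show ?thesis using False by simp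
          next
            case ne: False
            have "r i Y \<noteq> r i W" using ne prof_inj[OF prof i] Y Wm by (auto dest: inj_onD)
            then have "r i W < r i Y" using False by simp
            then show ?thesis using ui[OF i] Y Wm False by auto
          qed
        qed
      qed
      moreover have "(\<Sum>Y<m. u i Y) = (\<Sum>Y<m. if r i Y < r i W then u i Y else 0) + (\<Sum>Y<m. if r i Y < r i W then 0 else u i Y)"
        by (simp add: sum.distrib[symmetric] if_distrib cong: if_cong)
      ultimately show ?thesis using ui[OF i] by simp
    qed
    have "T = (\<Sum>i<n. \<Sum>Y<m. if r i Y < r i W then u i Y else 0)"
      unfolding T_def SWT_def by (rule sum.swap)
    moreover have "(\<Sum>i<n. 1 - real m * u i W) \<le> (\<Sum>i<n. \<Sum>Y<m. if r i Y < r i W then u i Y else 0)"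
      using per by (intro sum_mono) auto
    moreover have "(\<Sum>i<n. 1 - real m * u i W) = real n - real m * SW n u W"
      by (simp add: sum_subtractf SW_def sum_distrib_left)
    ultimately show ?thesis by simp
  qed
  have A5: "SW n u X \<le> SWT X + SW n u W"
  proof -
    have "SW n u X \<le> (\<Sum>i<n. (if r i X < r i W then u i X else 0) + u i W)"
      unfolding SW_def
    proof (rule sum_mono)
      fix i assume "i \<in> {..<n}" then have i: "i < n" by simp
      show "u i X \<le> (if r i X < r i W then u i X else 0) + u i W"
      proof (cases "r i X < r i W")
        case True then show ?thesis using ui[OF i] Wm by auto
      next
        case False
        show ?thesis
        proof (cases "X = W")
          case True then show ?thesis using False ui[OF i] Wm by auto
        next
          case ne: False
          have "r i X \<noteq> r i W" using ne prof_inj[OF prof i] X Wm by (auto dest: inj_onD)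
          then have "r i W < r i X" using False by simp
          then show ?thesis using ui[OF i] X Wm False by auto
        qed
      qed
    qed
    then show ?thesis by (simp add: sum.distrib SWT_def SW_def)
  qed
  have A2: "\<epsilon> * SW n u X * SWT X \<le> E * real n * (6 * h)"
  proof -
    have "\<epsilon> * (SW n u X * SWT X) \<le> \<epsilon> * G" using GX e by (intro mult_left_mono) auto
    then show ?thesis using B ED by (simp add: mult_ac)
  qed
  have A3: "\<epsilon> * (T ^ 2 / real m) \<le> E * real n * (6 * h)"
  proof -
    have "\<epsilon> * (T ^ 2 / real m) \<le> \<epsilon> * G" using GT e by (intro mult_left_mono) auto
    then show ?thesis using B ED by (simp add: mult_ac)
  qed
  have "SW n u X \<le> 20 * sqrt (real m) * h / \<epsilon> * E"
    by (rule th_util_arith[OF e h1 _ _ SWnn[OF X] E0 A1 A2 A3 A4 A5]) (use m1 in auto)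
  then show ?thesis by (simp add: E_def h_def)
qed


theorem mainTheorem7:
  shows "(\<forall>\<epsilon>::real. 0 < \<epsilon> \<and> \<epsilon> \<le> 3 \<longrightarrow>
            (\<forall>n m r d. 1 \<le> n \<and> 1 \<le> m \<and> is_profile n m r \<and>
                pseudometric_on (points n m) d \<and> metric_consistent n m r d \<longrightarrow>
                (\<forall>X<m. (\<Sum>Y<m. th_prob \<epsilon> n m r Y * SC n d Y) \<le> (3 + \<epsilon>) * SC n d X)))
       \<and> (\<exists>C::real. \<forall>n m r u \<epsilon>::real. 0 < \<epsilon> \<and> \<epsilon> \<le> 3 \<and> 1 \<le> n \<and> 1 \<le> m \<and>
            is_profile n m r \<and> utilities_consistent n m r u \<longrightarrow>
            (\<forall>X<m. SW n u X \<le> C * sqrt (real m) * harm m / \<epsilon> *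
                       (\<Sum>Y<m. th_prob \<epsilon> n m r Y * SW n u Y)))"
proof (intro conjI)
  show "\<forall>\<epsilon>::real. 0 < \<epsilon> \<and> \<epsilon> \<le> 3 \<longrightarrow>
            (\<forall>n m r d. 1 \<le> n \<and> 1 \<le> m \<and> is_profile n m r \<and>
                pseudometric_on (points n m) d \<and> metric_consistent n m r d \<longrightarrow>
                (\<forall>X<m. (\<Sum>Y<m. th_prob \<epsilon> n m r Y * SC n d Y) \<le> (3 + \<epsilon>) * SC n d X))"
    using th_metric by blast
  show "\<exists>C::real. \<forall>n m r u \<epsilon>::real. 0 < \<epsilon> \<and> \<epsilon> \<le> 3 \<and> 1 \<le> n \<and> 1 \<le> m \<and>
            is_profile n m r \<and> utilities_consistent n m r u \<longrightarrow>
            (\<forall>X<m. SW n u X \<le> C * sqrt (real m) * harm m / \<epsilon> *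
                       (\<Sum>Y<m. th_prob \<epsilon> n m r Y * SW n u Y))"
    by (rule exI[of _ 20]) (use th_util in blast)
qed

end
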